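(* Let $q\in(0,1]$. Consider the parametric convex semi-infinite problem described in the context, and let $(\bar c,\bar b)\in\mathbb{R}^n\times\mathcal{C}(T,\mathbb{R})$ and $\bar x\in\mathcal{S}(\bar c,\bar b)$. Assume that $P(\bar c,\bar b)$ satisfies the Slater condition. Consider the statements: (i) $\mathcal{S}$ is $q$-order calm at $((\bar c,\bar b),\bar x)$; (ii) $\mathcal{S}_{\bar c}$ is $q$-order calm at $(\bar b,\bar x)$; (iii) $\mathcal{L}$ is $q$-order calm at $((f(\bar x)+\langle\bar c,\bar x\rangle,\bar b),\bar x)$; (iv) $\bar f$ admits a $q$-order local error bound at $\bar x$, i.e. there exist $\tau>0$, $\delta>0$ with $\tau\, d(x,[\bar f\le 0])\le [\max\{\bar f(x),0\}]^q$ for all $x$ with $\|x-\bar x\|<\delta$. Then (iii) $\Leftrightarrow$ (iv) $\Rightarrow$ (i) $\Rightarrow$ (ii). In addition, if $f$ and all $g_t$ ($t\in T$) are linear, then (i) $\Leftrightarrow$ (ii) $\Leftrightarrow$ (iii) $\Leftrightarrow$ (iv).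
   Context: Setting: $T$ is a compact subset of a metric space $Z$ with $T\neq Z$; $f:\mathbb{R}^n\to\mathbb{R}$ and $g_t:\mathbb{R}^n\to\mathbb{R}$ ($t\in T$) are convex, and $(t,x)\mapsto g_t(x)$ is continuous on $T\times\mathbb{R}^n$. $\mathcal{C}(T,\mathbb{R})$ is the space of continuous functions $b:T\to\mathbb{R}$, $t\mapsto b_t$, with $\|b\|_\infty=\max_{t\in T}|b_t|$. For $(c,b)\in\mathbb{R}^n\times\mathcal{C}(T,\mathbb{R})$ the problem $P(c,b)$ is: minimize $f(x)+\langle c,x\rangle$ subject to $g_t(x)\le b_t$ for all $t\in T$. The parameter space carries the norm $\|(c,b)\|=\max\{\|c\|,\|b\|_\infty\}$ ($\|\cdot\|$ Euclidean on $\mathbb{R}^n$). $\mathcal{S}(c,b)$ is the set of optimal solutions of $P(c,b)$; $\mathcal{S}_c(b):=\mathcal{S}(c,b)$ for fixed $c$; $\mathcal{F}(b):=\{x: g_t(x)\le b_t,\ t\in T\}$. $P(c,b)$ satisfies the Slater condition if there is $\hat x$ with $g_t(\hat x)<b_t$ for all $t\in T$. The level set mapping $\mathcal{L}:\mathbb{R}\times\mathcal{C}(T,\mathbb{R})\rightrightarrows\mathbb{R}^n$ is $\mathcal{L}(\alpha,b)=\{x: f(x)+\langle\bar c,x\rangle\le\alpha,\ g_t(x)\le b_t,\ t\in T\}$, with $\mathbb{R}\times\mathcal{C}(T,\mathbb{R})$ normed by $\max\{|\alpha|,\|b\|_\infty\}$. The supremum function is $\bar f(x):=\sup\{f(x)-f(\bar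 x)+\langle\bar c,x-\bar x\rangle;\ g_t(x)-\bar b_t,\ t\in T\}$, and $[\bar f\le0]=\{x:\bar f(x)\le0\}$. For a set-valued map $S:Y\rightrightarrows X$ between metric spaces, $(\bar y,\bar x)\in\operatorname{gph}S$ and $q>0$, $S$ is $q$-order calm at $(\bar y,\bar x)$ if there exist $\tau>0$ and neighbourhoods $U$ of $\bar x$, $V$ of $\bar y$ such that $\tau\, d(x,S(\bar y))\le d(y,\bar y)^q$ for all $y\in V$ and $x\in S(y)\cap U$. *)

theory Defs
  imports "HOL-Analysis.Analysis"
begin

text \<open>Sup-norm distance on C(T,R); functions are represented as total functions,
  only their values on T matter. The insert 0 makes the empty-T case give 0.\<close>
definition supdist :: "'z set \<Rightarrow> ('z \<Rightarrow> real) \<Rightarrow> ('z \<Rightarrow> real) \<Rightarrow> real" where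
  "supdist T b b' = Sup (insert 0 ((\<lambda>t. \<bar>b t - b' t\<bar>) ` T))"

definition pdist :: "'z set \<Rightarrow> ('a::real_normed_vector \<times> ('z \<Rightarrow> real)) \<Rightarrow> ('a \<times> ('z \<Rightarrow> real)) \<Rightarrow> real" where
  "pdist T p p' = max (norm (fst p - fst p')) (supdist T (snd p) (snd p'))"

definition feas :: "'z set \<Rightarrow> ('z \<Rightarrow> 'a \<Rightarrow> real) \<Rightarrow> ('z \<Rightarrow> real) \<Rightarrow> 'a set" where
  "feas T g b = {x. \<forall>t\<in>T. g t x \<le> b t}"

definition optset :: "'z set \<Rightarrow> ('a::real_inner \<Rightarrow> real) \<Rightarrow> ('z \<Rightarrow> 'a \<Rightarrow> real)
    \<Rightarrow> 'a \<times> ('z \<Rightarrow> real) \<Rightarrow> 'a set" where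
  "optset T f g p = {x \<in> feas T g (snd p). \<forall>y \<in> feas T g (snd p).
      f x + inner (fst p) x \<le> f y + inner (fst p) y}"

definition levelset :: "'z set \<Rightarrow> ('a::real_inner \<Rightarrow> real) \<Rightarrow> ('z \<Rightarrow> 'a \<Rightarrow> real) \<Rightarrow> 'a
    \<Rightarrow> real \<times> ('z \<Rightarrow> real) \<Rightarrow> 'a set" where
  "levelset T f g cbar p = {x \<in> feas T g (snd p). f x + inner cbar x \<le> fst p}"

definition ldist :: "'z set \<Rightarrow> real \<times> ('z \<Rightarrow> real) \<Rightarrow> real \<times> ('z \<Rightarrow> real) \<Rightarrow> real" where
  "ldist T p p' = max \<bar>fst p - fst p'\<bar> (supdist T (snd p) (snd p'))"

definition supfun :: "'z set \<Rightarrow> ('a::real_inner \<Rightarrow> real) \<Rightarrow> ('z \<Rightarrow> 'a \<Rightarrow> real) \<Rightarrow> 'a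
    \<Rightarrow> ('z \<Rightarrow> real) \<Rightarrow> 'a \<Rightarrow> 'a \<Rightarrow> real" where
  "supfun T f g cbar bbar xbar x =
     Sup (insert (f x - f xbar + inner cbar (x - xbar)) ((\<lambda>t. g t x - bbar t) ` T))"

text \<open>q-order calmness of S : Y \<rightrightarrows> X at (ybar,xbar), Y a subset with distance dY,
  X a metric space; neighbourhoods taken as balls.\<close>
definition q_calm :: "('y \<Rightarrow> 'y \<Rightarrow> real) \<Rightarrow> 'y set \<Rightarrow> ('y \<Rightarrow> 'x::metric_space set)
    \<Rightarrow> real \<Rightarrow> 'y \<Rightarrow> 'x \<Rightarrow> bool" where
  "q_calm dY Y S q ybar xbar \<longleftrightarrow>
     (\<exists>\<tau>>0. \<exists>\<delta>>0. \<exists>\<epsilon>>0. \<forall>y\<in>Y. dY y ybar < \<epsilon> \<longrightarrow>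
        (\<forall>x\<in>S y. dist x xbar < \<delta> \<longrightarrow> \<tau> * infdist x (S ybar) \<le> (dY y ybar) powr q))"

end

theory Submission
  imports Defs
begin


lemma gcont_t:
  assumes "continuous_on (T \<times> UNIV) (\<lambda>(t, x). g t x)"
  shows "continuous_on T (\<lambda>t. g t x)"
proof -
  have "continuous_on T (\<lambda>t. (t, x))" by (intro continuous_intros)
  moreover have "(\<lambda>t. (t, x)) ` T \<subseteq> T \<times> UNIV" by auto
  ultimately have "continuous_on T ((\<lambda>(t, x). g t x) \<circ> (\<lambda>t. (t, x)))"
    using continuous_on_compose continuous_on_subset assms by blast
  then show ?thesis by (simp add: o_def)
qed

lemma bdd_cont:
  fixes h :: "'z::metric_space \<Rightarrow> real"
  assumes "compact T" "continuous_on T h"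
  shows "bdd_above (h ` T)"
  using assms by (intro bounded_imp_bdd_above compact_imp_bounded compact_continuous_image)

lemma supdist_ge:
  fixes T :: "'z::metric_space set"
  assumes "compact T" "continuous_on T b" "continuous_on T b'" "t \<in> T"
  shows "\<bar>b t - b' t\<bar> \<le> supdist T b b'"
proof -
  have "continuous_on T (\<lambda>t. \<bar>b t - b' t\<bar>)" using assms by (intro continuous_intros)
  then have "bdd_above ((\<lambda>t. \<bar>b t - b' t\<bar>) ` T)" by (rule bdd_cont[OF assms(1)])
  then show ?thesis unfolding supdist_def using assms(4)
    by (intro cSup_upper) auto
qed

lemma supdist_nonneg:
  fixes T :: "'z::metric_space set"
  assumes "compact T" "continuous_on T b" "continuous_on T b'"
  shows "0 \<le> supdist T b b'"
proof -
  have "continuous_on T (\<lambda>t. \<bar>b t - b' t\<bar>)" using assms by (intro continuous_intros)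
  then have "bdd_above ((\<lambda>t. \<bar>b t - b' t\<bar>) ` T)" by (rule bdd_cont[OF assms(1)])
  then show ?thesis unfolding supdist_def
    by (intro cSup_upper) auto
qed

lemma supdist_le:
  assumes "0 \<le> M" "\<And>t. t \<in> T \<Longrightarrow> \<bar>b t - b' t\<bar> \<le> M"
  shows "supdist T b b' \<le> M"
  unfolding supdist_def using assms by (intro cSup_least) auto

lemma slater_unif:
  fixes h :: "'z::metric_space \<Rightarrow> real"
  assumes "compact T" "continuous_on T h" "\<forall>t\<in>T. 0 < h t"
  shows "\<exists>s>0. \<forall>t\<in>T. s \<le> h t"
proof (cases "T = {}")
  case True then show ?thesis by (intro exI[of _ 1]) auto
next
  case False
  then obtain t0 where "t0 \<in> T" "\<forall>t\<in>T. h t0 \<le> h t"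
    using continuous_attains_inf[OF assms(1) False assms(2)] by blast
  then show ?thesis using assms(3) by blast
qed

definition lrep :: "('a::euclidean_space \<Rightarrow> real) \<Rightarrow> 'a" where
  "lrep h = (\<Sum>i\<in>Basis. h i *\<^sub>R i)"

lemma lrep:
  fixes h :: "'a::euclidean_space \<Rightarrow> real"
  assumes "linear h"
  shows "h x = inner (lrep h) x"
proof -
  have "h x = h x \<bullet> 1" by simp
  also have "\<dots> = (\<Sum>i\<in>Basis. (x \<bullet> i) * (h i \<bullet> 1))" by (rule Linear_Algebra.linear_componentwise[OF assms])
  also have "\<dots> = inner (lrep h) x" unfolding lrep_def
    by (simp add: inner_sum_right inner_commute mult.commute)
  finally show ?thesis .
qed

lemma lin_comb:
  assumes "linear h"
  shows "h (a + c *\<^sub>R (b - d)) = h a + c * (h b - h d)"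
  using assms by (simp add: linear_add linear_scale linear_diff)

lemma noimprove:
  fixes g :: "'z::metric_space \<Rightarrow> 'a::real_normed_vector \<Rightarrow> real" and F :: "'a \<Rightarrow> real"
  assumes cT: "compact T" and lin: "\<forall>t\<in>T. linear (g t)" and linF: "linear F"
    and gc: "\<And>x. continuous_on T (\<lambda>t. g t x)" and bc: "continuous_on T bb"
    and xb: "\<forall>t\<in>T. g t xb \<le> bb t" and opt: "\<And>y. \<forall>t\<in>T. g t y \<le> bb t \<Longrightarrow> F xb \<le> F y"
    and s: "s > 0" and sl: "\<forall>t\<in>T. g t xh + s \<le> bb t"
    and w: "F w < 0" and wA: "\<forall>t\<in>T. g t xb = bb t \<longrightarrow> g t w \<le> 0"
  shows False
proof -
  define \<eta> where "\<eta> = - F w / (2 * (\<bar>F xh - F xb\<bar> + 1))"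
  have D: "\<bar>F xh - F xb\<bar> + 1 > 0"
    using abs_ge_zero[of "F xh - F xb"] by linarith
  have eta: "\<eta> > 0" unfolding \<eta>_def using w D by (intro divide_pos_pos) auto
  have eta2: "\<eta> * (\<bar>F xh - F xb\<bar> + 1) = - F w / 2"
    unfolding \<eta>_def using D by (simp add: divide_simps)
  define w' where "w' = w + \<eta> *\<^sub>R (xh - xb)"
  have "F w' = F w + \<eta> * (F xh - F xb)" unfolding w'_def by (rule lin_comb[OF linF])
  also have "\<eta> * (F xh - F xb) \<le> \<eta> * \<bar>F xh - F xb\<bar>" using eta by (intro mult_left_mono) auto
  finally have Fw'0: "F w' \<le> F w + \<eta> * \<bar>F xh - F xb\<bar>" by simp
  have "\<eta> * \<bar>F xh - F xb\<bar> < \<eta> * (\<bar>F xh - F xb\<bar> + 1)" using eta by simp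
  then have Fw': "F w' < 0" using eta2 w Fw'0 by linarith
  have gw': "g t w' = g t w + \<eta> * (g t xh - g t xb)" if "t \<in> T" for t
    unfolding w'_def by (rule lin_comb) (use lin that in auto)
  have Aneg: "g t w' < 0" if "t \<in> T" "g t xb = bb t" for t
  proof -
    have "g t w' \<le> 0 + \<eta> * (g t xh - g t xb)" using gw'[OF that(1)] wA that by auto
    also have "\<eta> * (g t xh - g t xb) \<le> \<eta> * (- s)"
      using sl that eta by (intro mult_left_mono) auto
    finally have "g t w' \<le> \<eta> * (- s)" by simp
    moreover have "\<eta> * (- s) < 0" using eta s by (simp add: mult_pos_neg)
    ultimately show ?thesis by linarith
  qed
  define T2 where "T2 = T \<inter> (\<lambda>t. g t w') -` {0..}"
  have "closed T2" unfolding T2_def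
    by (rule continuous_closed_preimage[OF gc compact_imp_closed[OF cT]]) simp
  then have cT2: "compact T2"
    using compact_Int_closed[OF cT, of T2] by (simp add: T2_def Int_absorb1 Int_assoc)
  have pos2: "\<forall>t\<in>T2. 0 < bb t - g t xb"
  proof
    fix t assume t: "t \<in> T2"
    then have tT: "t \<in> T" and tw: "0 \<le> g t w'" by (auto simp: T2_def)
    have "g t xb \<le> bb t" using xb tT by auto
    moreover have "g t xb \<noteq> bb t" using Aneg[OF tT] tw by force
    ultimately show "0 < bb t - g t xb" by linarith
  qed
  have "continuous_on T2 (\<lambda>t. bb t - g t xb)"
    by (rule continuous_on_subset[OF continuous_on_diff[OF bc gc]]) (auto simp: T2_def)
  then obtain \<rho> where rho: "\<rho> > 0" "\<forall>t\<in>T2. \<rho> \<le> bb t - g t xb"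
    using slater_unif[OF cT2 _ pos2] by blast
  have "continuous_on T (\<lambda>t. \<bar>g t w'\<bar>)" using gc by (intro continuous_intros)
  then have "bdd_above ((\<lambda>t. \<bar>g t w'\<bar>) ` T)" by (rule bdd_cont[OF cT])
  then obtain M where M: "\<forall>t\<in>T. \<bar>g t w'\<bar> \<le> M" by (auto simp: bdd_above_def)
  define \<sigma> where "\<sigma> = \<rho> / (\<bar>M\<bar> + 1)"
  have sig: "\<sigma> > 0" unfolding \<sigma>_def using rho by auto
  have sigM: "\<sigma> * M \<le> \<rho>"
  proof -
    have "\<sigma> * M \<le> \<sigma> * (\<bar>M\<bar> + 1)" using sig by (intro mult_left_mono) auto
    also have "\<dots> = \<rho>" unfolding \<sigma>_def by simp
    finally show ?thesis .
  qed
  define z where "z = xb + \<sigma> *\<^sub>R w'"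
  have gz: "g t z = g t xb + \<sigma> * g t w'" if "t \<in> T" for t
    unfolding z_def using lin that by (simp add: linear_add linear_scale)
  have "\<forall>t\<in>T. g t z \<le> bb t"
  proof
    fix t assume t: "t \<in> T"
    show "g t z \<le> bb t"
    proof (cases "0 \<le> g t w'")
      case True
      then have "t \<in> T2" using t by (auto simp: T2_def)
      then have "\<rho> \<le> bb t - g t xb" using rho by auto
      moreover have "\<sigma> * g t w' \<le> \<sigma> * M" using M t sig by (intro mult_left_mono) auto
      ultimately show ?thesis using gz[OF t] sigM by linarith
    next
      case False
      then have "\<sigma> * g t w' \<le> 0" using sig by (simp add: mult_nonneg_nonpos)
      then show ?thesis using gz[OF t] xb t by auto
    qed
  qed
  then have "F xb \<le> F z" by (rule opt)
  moreover have "F z = F xb + \<sigma> * F w'" unfolding z_def using linF by (simp add: linear_add linear_scale)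
  moreover have "\<sigma> * F w' < 0" using sig Fw' by (simp add: mult_pos_neg)
  ultimately show False by linarith
qed

lemma lrep_cont:
  fixes g :: "'z::metric_space \<Rightarrow> 'a::euclidean_space \<Rightarrow> real"
  assumes gc: "\<And>x. continuous_on T (\<lambda>t. g t x)"
  shows "continuous_on T (\<lambda>t. lrep (g t))"
  unfolding lrep_def by (intro continuous_on_sum continuous_on_scaleR gc continuous_on_const)

lemma kkt:
  fixes g :: "'z::metric_space \<Rightarrow> 'a::euclidean_space \<Rightarrow> real" and F :: "'a \<Rightarrow> real"
  assumes cT: "compact T" and lin: "\<forall>t\<in>T. linear (g t)" and linF: "linear F"
    and gc: "\<And>x. continuous_on T (\<lambda>t. g t x)" and bc: "continuous_on T bb"
    and xb: "\<forall>t\<in>T. g t xb \<le> bb t" and opt: "\<And>y. \<forall>t\<in>T. g t y \<le> bb t \<Longrightarrow> F xb \<le> F y"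
    and s: "s > 0" and sl: "\<forall>t\<in>T. g t xh + s \<le> bb t"
  shows "\<exists>S lam. finite S \<and> S \<subseteq> (\<lambda>t. lrep (g t)) ` {t\<in>T. g t xb = bb t}
           \<and> (\<forall>v\<in>S. 0 < lam v) \<and> - lrep F = (\<Sum>v\<in>S. lam v *\<^sub>R v)"
proof (cases "lrep F = 0")
  case True
  then show ?thesis by (intro exI[of _ "{}"]) auto
next
  case Fnz: False
  define A where "A = {t\<in>T. g t xb = bb t}"
  define P0 where "P0 = (\<lambda>t. lrep (g t)) ` A"
  define P where "P = convex hull P0"
  define K where "K = conic hull P"
  have "closed {x \<in> T. bb x - g x xb = 0}"
    using continuous_closed_preimage_constant[OF continuous_on_diff[OF bc gc] compact_imp_closed[OF cT], of xb 0] .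
  moreover have "{x \<in> T. bb x - g x xb = 0} = A" by (auto simp: A_def)
  ultimately have "closed A" by simp
  then have cA: "compact A"
    using compact_Int_closed[OF cT, of A] by (simp add: A_def Int_absorb1)
  have "continuous_on A (\<lambda>t. lrep (g t))"
    by (rule continuous_on_subset[OF lrep_cont[OF gc]]) (auto simp: A_def)
  then have "compact P0" unfolding P0_def using cA by (rule compact_continuous_image)
  then have cP: "compact P" unfolding P_def by (rule compact_convex_hull)
  have P0h: "P0 \<subseteq> {p. inner p (xh - xb) \<le> - s}"
  proof
    fix p assume "p \<in> P0"
    then obtain t where t: "t \<in> T" "g t xb = bb t" and p: "p = lrep (g t)"
      by (auto simp: P0_def A_def)
    have "inner p (xh - xb) = g t (xh - xb)" using p lrep lin t by metis
    also have "\<dots> = g t xh - g t xb" using lin t by (simp add: linear_diff)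
    finally show "p \<in> {p. inner p (xh - xb) \<le> - s}" using sl t by auto
  qed
  have "convex {p. inner p (xh - xb) \<le> - s}"
    using convex_halfspace_le[of "xh - xb" "- s"] by (simp add: inner_commute)
  then have Ph: "P \<subseteq> {p. inner p (xh - xb) \<le> - s}"
    unfolding P_def using P0h by (intro hull_minimal) auto
  have "0 \<notin> P" using Ph s by force
  then have clK: "closed K" unfolding K_def using cP closed_conic_hull by blast
  have cvK: "convex K" unfolding K_def P_def by (intro convex_conic_hull convex_convex_hull)
  have "- lrep F \<in> K"
  proof (rule ccontr)
    assume nK: "- lrep F \<notin> K"
    obtain w where w: "F w < 0" and wA: "\<forall>t\<in>T. g t xb = bb t \<longrightarrow> g t w \<le> 0"
    proof (cases "K = {}")
      case True
      then have "P0 = {}" unfolding K_def P_def by (simp add: conic_hull_eq_empty)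
      then have "A = {}" unfolding P0_def by simp
      moreover have "F (- lrep F) < 0"
        using lrep[OF linF, of "- lrep F"] Fnz by simp
      ultimately show ?thesis using that[of "- lrep F"] by (auto simp: A_def)
    next
      case False
      then have K0: "0 \<in> K" unfolding K_def using conic_hull_contains_0 conic_hull_eq_empty by blast
      obtain a b where ab: "inner a (- lrep F) < b" "\<forall>x\<in>K. b < inner a x"
        using separating_hyperplane_closed_point[OF cvK clK nK] by blast
      have b0: "b < 0" using ab(2) K0 by force
      have aK: "0 \<le> inner a k" if "k \<in> K" for k
      proof (rule ccontr)
        assume "\<not> 0 \<le> inner a k"
        then have neg: "inner a k < 0" by simp
        define c where "c = b / inner a k"
        have "c \<ge> 0" unfolding c_def using neg b0 by (simp add: divide_nonpos_neg)
        then have "c *\<^sub>R k \<in> K" using that conic_conic_hull unfolding K_def conic_def by blast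
        then have "b < inner a (c *\<^sub>R k)" using ab(2) by blast
        also have "inner a (c *\<^sub>R k) = b" unfolding c_def using neg by simp
        finally show False by simp
      qed
      show ?thesis
      proof (rule that[of "- a"])
        show "F (- a) < 0" using lrep[OF linF, of "- a"] ab(1) b0 by (simp add: inner_commute)
        show "\<forall>t\<in>T. g t xb = bb t \<longrightarrow> g t (- a) \<le> 0"
        proof (intro ballI impI)
          fix t assume t: "t \<in> T" "g t xb = bb t"
          then have "lrep (g t) \<in> P0" by (auto simp: P0_def A_def)
          then have "lrep (g t) \<in> K" unfolding K_def P_def by (meson hull_subset subsetD)
          then have "0 \<le> inner a (lrep (g t))" by (rule aK)
          moreover have "g t (- a) = inner (lrep (g t)) (- a)" using lrep lin t by metis
          ultimately show "g t (- a) \<le> 0" by (simp add: inner_commute)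
        qed
      qed
    qed
    show False by (rule noimprove[OF cT lin linF gc bc xb opt s sl w wA])
  qed
  then obtain c p where c: "0 \<le> c" and p: "p \<in> P" and up: "- lrep F = c *\<^sub>R p"
    unfolding K_def conic_hull_explicit by blast
  then obtain S0 \<mu> where S0: "finite S0" "S0 \<subseteq> P0" "\<forall>x\<in>S0. 0 \<le> \<mu> x"
      and pS: "(\<Sum>v\<in>S0. \<mu> v *\<^sub>R v) = p"
    unfolding P_def convex_hull_explicit by blast
  define S where "S = {v\<in>S0. 0 < c * \<mu> v}"
  have "- lrep F = (\<Sum>v\<in>S0. (c * \<mu> v) *\<^sub>R v)"
    unfolding up pS[symmetric] by (simp add: scaleR_sum_right)
  also have "\<dots> = (\<Sum>v\<in>S0. if 0 < c * \<mu> v then (c * \<mu> v) *\<^sub>R v else 0)"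
  proof (rule sum.cong)
    fix v assume "v \<in> S0"
    then have "0 \<le> c * \<mu> v" using c S0(3) by simp
    then show "(c * \<mu> v) *\<^sub>R v = (if 0 < c * \<mu> v then (c * \<mu> v) *\<^sub>R v else 0)" by auto
  qed simp
  also have "\<dots> = (\<Sum>v\<in>S. (c * \<mu> v) *\<^sub>R v)"
    unfolding S_def using S0(1) by (simp add: sum.inter_filter)
  finally show ?thesis
    using S0 unfolding S_def P0_def
    by (intro exI[of _ S] exI[of _ "\<lambda>v. c * \<mu> v"]) (auto simp: S_def A_def)
qed


theorem theorem4p7:
  fixes T :: "'z::metric_space set"
    and f :: "real^'n \<Rightarrow> real"
    and g :: "'z \<Rightarrow> real^'n \<Rightarrow> real"
    and q :: real and cbar :: "real^'n" and bbar :: "'z \<Rightarrow> real" and xbar :: "real^'n"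
  assumes T: "compact T" "T \<noteq> UNIV"
    and f_cvx: "convex_on UNIV f"
    and g_cvx: "\<forall>t\<in>T. convex_on UNIV (g t)"
    and g_cont: "continuous_on (T \<times> UNIV) (\<lambda>(t, x). g t x)"
    and q: "0 < q" "q \<le> 1"
    and bbar_cont: "continuous_on T bbar"
    and xbar: "xbar \<in> optset T f g (cbar, bbar)"
    and slater: "\<exists>xh. \<forall>t\<in>T. g t xh < bbar t"
  defines "Par \<equiv> {p :: (real^'n) \<times> ('z \<Rightarrow> real). continuous_on T (snd p)}"
    and "Cset \<equiv> {b :: 'z \<Rightarrow> real. continuous_on T b}"
    and "Lpar \<equiv> {p :: real \<times> ('z \<Rightarrow> real). continuous_on T (snd p)}"
    and "fbar \<equiv> supfun T f g cbar bbar xbar"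
  defines "st_i \<equiv> q_calm (pdist T) Par (optset T f g) q (cbar, bbar) xbar"
    and "st_ii \<equiv> q_calm (supdist T) Cset (\<lambda>b. optset T f g (cbar, b)) q bbar xbar"
    and "st_iii \<equiv> q_calm (ldist T) Lpar (levelset T f g cbar) q
                   (f xbar + inner cbar xbar, bbar) xbar"
    and "st_iv \<equiv> (\<exists>\<tau>>0. \<exists>\<delta>>0. \<forall>x. norm (x - xbar) < \<delta> \<longrightarrow>
                   \<tau> * infdist x {y. fbar y \<le> 0} \<le> (max (fbar x) 0) powr q)"
  shows "(st_iii \<longleftrightarrow> st_iv) \<and> (st_iv \<longrightarrow> st_i) \<and> (st_i \<longrightarrow> st_ii)
         \<and> ((linear f \<and> (\<forall>t\<in>T. linear (g t))) \<longrightarrow>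
              (st_i \<longleftrightarrow> st_ii) \<and> (st_ii \<longleftrightarrow> st_iii) \<and> (st_iii \<longleftrightarrow> st_iv))"
  proof -
  define F where "F = (\<lambda>x. f x + inner cbar x)"
  have gc: "\<And>x. continuous_on T (\<lambda>t. g t x)" using gcont_t[OF g_cont] .
  have xfeas: "\<forall>t\<in>T. g t xbar \<le> bbar t" and opt: "\<And>y. \<forall>t\<in>T. g t y \<le> bbar t \<Longrightarrow> F xbar \<le> F y"
    using xbar by (auto simp: optset_def feas_def F_def)
  have bdd: "bdd_above ((\<lambda>t. g t x - bbar t) ` T)" for x
    by (rule bdd_cont[OF T(1) continuous_on_diff[OF gc bbar_cont]])
  have fbar_eq: "fbar x = Sup (insert (F x - F xbar) ((\<lambda>t. g t x - bbar t) ` T))" for x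
  proof -
    have "f x - f xbar + inner cbar (x - xbar) = F x - F xbar" by (simp add: F_def inner_diff_right)
    then show ?thesis by (simp add: fbar_def supfun_def)
  qed
  have fb_ge1: "F x - F xbar \<le> fbar x" for x
    unfolding fbar_eq using bdd[of x] by (intro cSup_upper) auto
  have fb_ge2: "g t x - bbar t \<le> fbar x" if "t \<in> T" for x t
    unfolding fbar_eq using bdd[of x] that by (intro cSup_upper) auto
  have fb_le: "fbar x \<le> M" if "F x - F xbar \<le> M" "\<forall>t\<in>T. g t x - bbar t \<le> M" for x M
    unfolding fbar_eq using that by (intro cSup_least) auto
  have L0: "levelset T f g cbar (f xbar + inner cbar xbar, bbar) = optset T f g (cbar, bbar)"
    using opt xfeas by (auto simp: levelset_def optset_def feas_def F_def) (smt (verit) opt F_def)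
  have S0: "{y. fbar y \<le> 0} = optset T f g (cbar, bbar)"
  proof -
    have "{y. fbar y \<le> 0} = levelset T f g cbar (f xbar + inner cbar xbar, bbar)"
    proof (intro set_eqI iffI)
      fix y assume "y \<in> {y. fbar y \<le> 0}"
      then have "fbar y \<le> 0" by simp
      then show "y \<in> levelset T f g cbar (f xbar + inner cbar xbar, bbar)"
        using fb_ge1[of y] fb_ge2[of _ y] by (force simp: levelset_def feas_def F_def)
    next
      fix y assume "y \<in> levelset T f g cbar (f xbar + inner cbar xbar, bbar)"
      then show "y \<in> {y. fbar y \<le> 0}"
        by (auto intro!: fb_le simp: levelset_def feas_def F_def)
    qed
    then show ?thesis using L0 by simp
  qed
  have xbar0: "fbar xbar \<le> 0" by (rule fb_le) (use xfeas in auto)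
  have iii_iv: "st_iv" if "st_iii"
  proof -
    let ?p0 = "(f xbar + inner cbar xbar, bbar)"
    obtain \<tau> \<delta> \<epsilon> where tau: "\<tau> > 0" and del: "\<delta> > 0" and eps: "\<epsilon> > 0"
      and H: "\<forall>p\<in>Lpar. ldist T p ?p0 < \<epsilon> \<longrightarrow> (\<forall>x\<in>levelset T f g cbar p. dist x xbar < \<delta> \<longrightarrow>
            \<tau> * infdist x (levelset T f g cbar ?p0) \<le> (ldist T p ?p0) powr q)"
      using \<open>st_iii\<close> unfolding st_iii_def q_calm_def by blast
    define \<tau>' where "\<tau>' = min \<tau> (\<epsilon> powr q / \<delta>)"
    have tau': "\<tau>' > 0" unfolding \<tau>'_def using tau del eps by simp
    have "\<tau>' * infdist x {y. fbar y \<le> 0} \<le> (max (fbar x) 0) powr q" if nx: "norm (x - xbar) < \<delta>" for x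
    proof -
      define r where "r = max (fbar x) 0"
      have r0: "0 \<le> r" unfolding r_def by simp
      define I where "I = infdist x {y. fbar y \<le> 0}"
      have I0: "0 \<le> I" unfolding I_def by (rule infdist_nonneg)
      show ?thesis
      proof (cases "r < \<epsilon>")
        case True
        define p where "p = (F xbar + r, \<lambda>t. bbar t + r)"
        have pL: "p \<in> Lpar" unfolding p_def Lpar_def by (auto intro!: continuous_intros bbar_cont)
        have sd: "supdist T (\<lambda>t. bbar t + r) bbar \<le> r" by (rule supdist_le) (use r0 in auto)
        have ld: "ldist T p ?p0 = r" unfolding p_def ldist_def F_def using sd r0 by simp
        have xl: "x \<in> levelset T f g cbar p"
          using fb_ge1[of x] fb_ge2[of _ x] unfolding p_def levelset_def feas_def F_def r_def
          by (force simp: max_def)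
        have "\<tau> * infdist x (levelset T f g cbar ?p0) \<le> (ldist T p ?p0) powr q"
        proof -
          have hp: "ldist T p ?p0 < \<epsilon>" using ld True by simp
          have "\<forall>x\<in>levelset T f g cbar p. dist x xbar < \<delta> \<longrightarrow>
            \<tau> * infdist x (levelset T f g cbar ?p0) \<le> (ldist T p ?p0) powr q" using H pL hp by blast
          then show ?thesis using xl nx by (simp add: dist_norm)
        qed
        then have "\<tau> * I \<le> r powr q" using ld L0 S0 unfolding I_def by simp
        moreover have "\<tau>' * I \<le> \<tau> * I" unfolding \<tau>'_def using I0 by (intro mult_right_mono) auto
        ultimately show ?thesis unfolding I_def r_def by simp
      next
        case False
        have "I \<le> dist x xbar" unfolding I_def using xbar0 by (intro infdist_le) simp
        then have Id: "I \<le> \<delta>" using nx by (simp add: dist_norm)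
        have "\<tau>' * I \<le> (\<epsilon> powr q / \<delta>) * I" unfolding \<tau>'_def using I0 by (intro mult_right_mono) auto
        also have "\<dots> \<le> (\<epsilon> powr q / \<delta>) * \<delta>" using Id del by (intro mult_left_mono) auto
        also have "\<dots> = \<epsilon> powr q" using del by simp
        also have "\<dots> \<le> r powr q" using False eps q by (intro powr_mono2) auto
        finally show ?thesis unfolding I_def r_def .
      qed
    qed
    then show ?thesis unfolding st_iv_def using tau' del by blast
  qed
  have iv_iii: "st_iii" if "st_iv"
  proof -
    obtain \<tau> \<delta> where tau: "\<tau> > 0" and del: "\<delta> > 0"
      and H: "\<And>x. norm (x - xbar) < \<delta> \<Longrightarrow> \<tau> * infdist x {y. fbar y \<le> 0} \<le> (max (fbar x) 0) powr q"
      using \<open>st_iv\<close> unfolding st_iv_def by blast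
    let ?p0 = "(f xbar + inner cbar xbar, bbar)"
    have "\<forall>p\<in>Lpar. ldist T p ?p0 < 1 \<longrightarrow> (\<forall>x\<in>levelset T f g cbar p. dist x xbar < \<delta> \<longrightarrow>
            \<tau> * infdist x (levelset T f g cbar ?p0) \<le> (ldist T p ?p0) powr q)"
    proof (intro ballI impI)
      fix p x assume p: "p \<in> Lpar" and x: "x \<in> levelset T f g cbar p" and dx: "dist x xbar < \<delta>"
      obtain \<alpha> b where pe: "p = (\<alpha>, b)" by fastforce
      have bc: "continuous_on T b" using p pe by (simp add: Lpar_def)
      define d where "d = ldist T p ?p0"
      have d1: "\<bar>\<alpha> - F xbar\<bar> \<le> d" unfolding d_def pe ldist_def F_def by simp
      have d2: "supdist T b bbar \<le> d" unfolding d_def pe ldist_def by simp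
      have d0: "0 \<le> d" using d1 by linarith
      have xg: "\<forall>t\<in>T. g t x \<le> b t" and xF: "F x \<le> \<alpha>"
        using x by (auto simp: pe levelset_def feas_def F_def)
      have "fbar x \<le> d"
      proof (rule fb_le)
        show "F x - F xbar \<le> d" using xF d1 by linarith
        show "\<forall>t\<in>T. g t x - bbar t \<le> d"
        proof
          fix t assume t: "t \<in> T"
          have "\<bar>b t - bbar t\<bar> \<le> supdist T b bbar" by (rule supdist_ge[OF T(1) bc bbar_cont t])
          then show "g t x - bbar t \<le> d" using xg t d2 by fastforce
        qed
      qed
      then have "max (fbar x) 0 powr q \<le> d powr q" using q d0 by (intro powr_mono2) auto
      moreover have "norm (x - xbar) < \<delta>" using dx by (simp add: dist_norm)
      ultimately show "\<tau> * infdist x (levelset T f g cbar ?p0) \<le> (ldist T p ?p0) powr q"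
        using H[of x] L0 S0 unfolding d_def by simp
    qed
    then show ?thesis unfolding st_iii_def q_calm_def using tau del zero_less_one by blast
  qed
  have iv_i: "st_i" if "st_iv"
  proof -
    obtain \<tau> \<delta> where tau: "\<tau> > 0" and del: "\<delta> > 0"
      and H: "\<And>x. norm (x - xbar) < \<delta> \<Longrightarrow> \<tau> * infdist x {y. fbar y \<le> 0} \<le> (max (fbar x) 0) powr q"
      using \<open>st_iv\<close> unfolding st_iv_def by blast
    obtain xh where xh: "\<forall>t\<in>T. g t xh < bbar t" using slater by blast
    obtain s where s: "s > 0" and sl: "\<forall>t\<in>T. s \<le> bbar t - g t xh"
      using slater_unif[OF T(1) continuous_on_diff[OF bbar_cont gc], of xh] xh by force
    define A0 where "A0 = F xh - F xbar"
    have A0: "0 \<le> A0" unfolding A0_def using opt[of xh] xh by force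
    define B where "B = norm (xh - xbar)"
    define K where "K = A0 / s + B + \<delta> + 1"
    have K1: "1 \<le> K" unfolding K_def B_def using A0 s del by simp
    then have Kp: "0 < K powr q" by simp
    define \<tau>' where "\<tau>' = \<tau> / K powr q"
    have tau': "\<tau>' > 0" unfolding \<tau>'_def using tau Kp by simp
    have "\<forall>p\<in>Par. pdist T p (cbar, bbar) < s \<longrightarrow> (\<forall>x\<in>optset T f g p. dist x xbar < \<delta> \<longrightarrow>
            \<tau>' * infdist x (optset T f g (cbar, bbar)) \<le> (pdist T p (cbar, bbar)) powr q)"
    proof (intro ballI impI)
      fix p x assume p: "p \<in> Par" and ps: "pdist T p (cbar, bbar) < s"
        and x: "x \<in> optset T f g p" and dx: "dist x xbar < \<delta>"
      obtain c b where pe: "p = (c, b)" by fastforce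
      have bc: "continuous_on T b" using p pe by (simp add: Par_def)
      define d where "d = pdist T p (cbar, bbar)"
      have nc: "norm (c - cbar) \<le> d" unfolding d_def pe pdist_def by simp
      have d2: "supdist T b bbar \<le> d" unfolding d_def pe pdist_def by simp
      have sb: "\<bar>b t - bbar t\<bar> \<le> d" if "t \<in> T" for t
        using supdist_ge[OF T(1) bc bbar_cont that] d2 by linarith
      have d0: "0 \<le> d" using nc norm_ge_zero order_trans by blast
      have ds: "d < s" using ps d_def by simp
      define lam where "lam = d / s"
      have l0: "0 \<le> lam" and l1: "lam \<le> 1" unfolding lam_def using d0 ds s by auto
      have ls: "lam * s = d" unfolding lam_def using s by simp
      define y where "y = (1 - lam) *\<^sub>R xbar + lam *\<^sub>R xh"
      have yx: "y - xbar = lam *\<^sub>R (xh - xbar)" unfolding y_def by (simp add: algebra_simps)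
      have yfeas: "\<forall>t\<in>T. g t y \<le> b t"
      proof
        fix t assume t: "t \<in> T"
        have "g t y \<le> (1 - lam) * g t xbar + lam * g t xh"
          unfolding y_def using g_cvx t l0 l1 by (intro convex_onD) auto
        also have "\<dots> \<le> (1 - lam) * bbar t + lam * (bbar t - s)"
          using xfeas sl t l0 l1 by (intro add_mono mult_left_mono) auto
        also have "\<dots> = bbar t - d" using ls by (simp add: algebra_simps)
        also have "\<dots> \<le> b t" using sb[OF t] by linarith
        finally show "g t y \<le> b t" .
      qed
      have xg: "\<forall>t\<in>T. g t x \<le> b t" and xopt: "f x + inner c x \<le> f y + inner c y"
        using x yfeas by (auto simp: pe optset_def feas_def)
      have fy: "f y \<le> (1 - lam) * f xbar + lam * f xh"
        unfolding y_def using f_cvx l0 l1 by (intro convex_onD) auto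
      have iy: "inner cbar y = (1 - lam) * inner cbar xbar + lam * inner cbar xh"
        unfolding y_def by (simp add: inner_add_right)
      have Fy: "F y - F xbar \<le> lam * A0"
        using fy iy unfolding F_def A0_def by (simp add: algebra_simps)
      have "F x - F xbar = (f x + inner c x) + inner (cbar - c) x - F xbar"
        unfolding F_def by (simp add: inner_diff_left)
      also have "\<dots> \<le> (f y + inner c y) + inner (cbar - c) x - F xbar" using xopt by simp
      also have "\<dots> = (F y - F xbar) + inner (c - cbar) (y - x)"
        unfolding F_def by (simp add: inner_diff_left inner_diff_right algebra_simps)
      also have "inner (c - cbar) (y - x) \<le> norm (c - cbar) * norm (y - x)" by (rule norm_cauchy_schwarz)
      also have "norm (c - cbar) * norm (y - x) \<le> d * (B + \<delta>)"
      proof (rule mult_mono)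
        have "norm (y - x) \<le> norm (y - xbar) + norm (xbar - x)" using norm_triangle_ineq[of "y - xbar" "xbar - x"] by simp
        also have "norm (y - xbar) = lam * B" unfolding yx B_def using l0 by simp
        also have "lam * B \<le> B" using l1 l0 unfolding B_def by (intro mult_left_le_one_le) auto
        also have "norm (xbar - x) < \<delta>" using dx by (simp add: dist_norm norm_minus_commute)
        finally show "norm (y - x) \<le> B + \<delta>" by simp
      qed (use nc d0 in auto)
      finally have "F x - F xbar \<le> lam * A0 + d * (B + \<delta>)" using Fy by simp
      also have "lam * A0 + d * (B + \<delta>) \<le> d * K"
        unfolding K_def lam_def using d0 by (simp add: algebra_simps)
      finally have Fx: "F x - F xbar \<le> d * K" .
      have "fbar x \<le> d * K"
      proof (rule fb_le[OF Fx], intro ballI)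
        fix t assume t: "t \<in> T"
        have "g t x - bbar t \<le> d" using xg sb[OF t] t by fastforce
        also have "d \<le> d * K" using K1 d0 by (simp add: mult_le_cancel_left1)
        finally show "g t x - bbar t \<le> d * K" .
      qed
      then have "max (fbar x) 0 powr q \<le> (d * K) powr q" using q d0 K1 by (intro powr_mono2) auto
      also have "\<dots> = d powr q * K powr q" by (rule powr_mult)
      finally have "\<tau> * infdist x {y. fbar y \<le> 0} \<le> d powr q * K powr q"
        using H[of x] dx by (simp add: dist_norm)
      then have "\<tau>' * infdist x {y. fbar y \<le> 0} \<le> d powr q"
        unfolding \<tau>'_def using Kp by (simp add: divide_le_eq mult.commute mult.left_commute)
      then show "\<tau>' * infdist x (optset T f g (cbar, bbar)) \<le> (pdist T p (cbar, bbar)) powr q"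
        using S0 d_def by simp
    qed
    then show ?thesis unfolding st_i_def q_calm_def using tau' del s by blast
  qed
  have i_ii: "st_ii" if "st_i"
  proof -
    obtain \<tau> \<delta> \<epsilon> where tau: "\<tau> > 0" and del: "\<delta> > 0" and eps: "\<epsilon> > 0"
      and H: "\<forall>p\<in>Par. pdist T p (cbar, bbar) < \<epsilon> \<longrightarrow> (\<forall>x\<in>optset T f g p. dist x xbar < \<delta> \<longrightarrow>
            \<tau> * infdist x (optset T f g (cbar, bbar)) \<le> (pdist T p (cbar, bbar)) powr q)"
      using \<open>st_i\<close> unfolding st_i_def q_calm_def by blast
    have "\<forall>b\<in>Cset. supdist T b bbar < \<epsilon> \<longrightarrow> (\<forall>x\<in>optset T f g (cbar, b). dist x xbar < \<delta> \<longrightarrow>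
            \<tau> * infdist x (optset T f g (cbar, bbar)) \<le> (supdist T b bbar) powr q)"
    proof (intro ballI impI)
      fix b x assume b: "b \<in> Cset" and sb: "supdist T b bbar < \<epsilon>"
        and x: "x \<in> optset T f g (cbar, b)" and dx: "dist x xbar < \<delta>"
      have bc: "continuous_on T b" using b by (simp add: Cset_def)
      have "0 \<le> supdist T b bbar" by (rule supdist_nonneg[OF T(1) bc bbar_cont])
      then have pe: "pdist T (cbar, b) (cbar, bbar) = supdist T b bbar" by (simp add: pdist_def)
      have "(cbar, b) \<in> Par" using bc by (simp add: Par_def)
      then show "\<tau> * infdist x (optset T f g (cbar, bbar)) \<le> (supdist T b bbar) powr q"
        using H sb x dx pe by metis
    qed
    then show ?thesis unfolding st_ii_def q_calm_def using tau del eps by blast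
  qed
  have lin: "st_iii" if linf: "linear f" and ling: "\<forall>t\<in>T. linear (g t)" and "st_ii"
  proof -
    let ?p0 = "(f xbar + inner cbar xbar, bbar)"
    have linF: "linear F" unfolding F_def
      by (rule linearI) (simp_all add: linear_add[OF linf] linear_scale[OF linf] inner_add_right distrib_left)
    obtain xh where xh: "\<forall>t\<in>T. g t xh < bbar t" using slater by blast
    obtain s where s: "s > 0" and sl0: "\<forall>t\<in>T. s \<le> bbar t - g t xh"
      using slater_unif[OF T(1) continuous_on_diff[OF bbar_cont gc], of xh] xh by force
    have sl: "\<forall>t\<in>T. g t xh + s \<le> bbar t" using sl0 by force
    obtain Sv lam where Sv: "finite Sv" "Sv \<subseteq> (\<lambda>t. lrep (g t)) ` {t\<in>T. g t xbar = bbar t}"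
        and lam: "\<forall>v\<in>Sv. 0 < lam v" and uS: "- lrep F = (\<Sum>v\<in>Sv. lam v *\<^sub>R v)"
      using kkt[OF T(1) ling linF gc bbar_cont xfeas opt s sl] by blast
    have "\<forall>v\<in>Sv. \<exists>t. t \<in> T \<and> g t xbar = bbar t \<and> v = lrep (g t)" using Sv(2) by blast
    then obtain tv where tv: "\<And>v. v \<in> Sv \<Longrightarrow> tv v \<in> T"
        "\<And>v. v \<in> Sv \<Longrightarrow> g (tv v) xbar = bbar (tv v)" "\<And>v. v \<in> Sv \<Longrightarrow> v = lrep (g (tv v))"
      by metis
    have Frep: "F y = - (\<Sum>v\<in>Sv. lam v * g (tv v) y)" for y
    proof -
      have "F y = inner (lrep F) y" by (rule lrep[OF linF])
      also have "\<dots> = - inner (- lrep F) y" by simp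
      also have "inner (- lrep F) y = (\<Sum>v\<in>Sv. lam v * inner v y)" unfolding uS by (simp add: inner_sum_left)
      also have "\<dots> = (\<Sum>v\<in>Sv. lam v * g (tv v) y)"
      proof (rule sum.cong)
        fix v assume v: "v \<in> Sv"
        have "g (tv v) y = inner (lrep (g (tv v))) y" using lrep ling tv(1)[OF v] by blast
        then show "lam v * inner v y = lam v * g (tv v) y" using tv(3)[OF v] by simp
      qed simp
      finally show ?thesis .
    qed
    define \<Lambda> where "\<Lambda> = (\<Sum>v\<in>Sv. lam v)"
    define Q where "Q = (\<Sum>v\<in>Sv. 1 / lam v)"
    have La0: "0 \<le> \<Lambda>" unfolding \<Lambda>_def using lam by (intro sum_nonneg) auto
    have Q0: "0 \<le> Q" unfolding Q_def using lam by (intro sum_nonneg) auto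
    define K where "K = 1 + (1 + \<Lambda>) * Q"
    have K1: "1 \<le> K" unfolding K_def using La0 Q0 by simp
    then have Kp: "0 < K powr q" by simp
    obtain \<tau> \<delta> \<epsilon> where tau: "\<tau> > 0" and del: "\<delta> > 0" and eps: "\<epsilon> > 0"
      and H: "\<forall>b\<in>Cset. supdist T b bbar < \<epsilon> \<longrightarrow> (\<forall>x\<in>optset T f g (cbar, b). dist x xbar < \<delta> \<longrightarrow>
            \<tau> * infdist x (optset T f g (cbar, bbar)) \<le> (supdist T b bbar) powr q)"
      using \<open>st_ii\<close> unfolding st_ii_def q_calm_def by blast
    define \<tau>' where "\<tau>' = \<tau> / K powr q"
    have tau': "\<tau>' > 0" unfolding \<tau>'_def using tau Kp by simp
    have eps': "\<epsilon> / K > 0" using eps K1 by simp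
    have "\<forall>p\<in>Lpar. ldist T p ?p0 < \<epsilon> / K \<longrightarrow> (\<forall>x\<in>levelset T f g cbar p. dist x xbar < \<delta> \<longrightarrow>
            \<tau>' * infdist x (levelset T f g cbar ?p0) \<le> (ldist T p ?p0) powr q)"
    proof (intro ballI impI)
      fix p x assume p: "p \<in> Lpar" and pe0: "ldist T p ?p0 < \<epsilon> / K"
        and x: "x \<in> levelset T f g cbar p" and dx: "dist x xbar < \<delta>"
      obtain \<alpha> b where pe: "p = (\<alpha>, b)" by fastforce
      have bc: "continuous_on T b" using p pe by (simp add: Lpar_def)
      define d where "d = ldist T p ?p0"
      have d1: "\<bar>\<alpha> - F xbar\<bar> \<le> d" unfolding d_def pe ldist_def F_def by simp
      have d2: "supdist T b bbar \<le> d" unfolding d_def pe ldist_def by simp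
      have d0: "0 \<le> d" using d1 by linarith
      have sb: "\<bar>b t - bbar t\<bar> \<le> d" if "t \<in> T" for t
        using supdist_ge[OF T(1) bc bbar_cont that] d2 by linarith
      have xg: "\<forall>t\<in>T. g t x \<le> b t" and xF: "F x \<le> \<alpha>"
        using x by (auto simp: pe levelset_def feas_def F_def)
      have dK: "d \<le> K * d" using K1 d0 by (simp add: mult_le_cancel_right1)
      define e where "e v = g (tv v) x - bbar (tv v)" for v
      have eu: "e v \<le> d" if "v \<in> Sv" for v
        using xg sb[OF tv(1)[OF that]] tv(1)[OF that] unfolding e_def by fastforce
      have esum: "(\<Sum>v\<in>Sv. lam v * e v) = F xbar - F x"
      proof -
        have "(\<Sum>v\<in>Sv. lam v * e v) = (\<Sum>v\<in>Sv. lam v * g (tv v) x) - (\<Sum>v\<in>Sv. lam v * g (tv v) xbar)"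
          unfolding e_def using tv(2) by (simp add: right_diff_distrib sum_subtractf)
        then show ?thesis using Frep[of x] Frep[of xbar] by simp
      qed
      have el: "- (K * d) \<le> e v" if v: "v \<in> Sv" for v
      proof -
        have "(\<Sum>v\<in>Sv. lam v * e v) = lam v * e v + (\<Sum>w\<in>Sv - {v}. lam w * e w)"
          using Sv(1) v by (simp add: sum.remove)
        moreover have "(\<Sum>w\<in>Sv - {v}. lam w * e w) \<le> (\<Sum>w\<in>Sv - {v}. lam w * d)"
          using eu lam by (intro sum_mono mult_left_mono) auto
        moreover have "(\<Sum>w\<in>Sv - {v}. lam w * d) \<le> (\<Sum>w\<in>Sv. lam w * d)"
          using Sv(1) lam d0 by (intro sum_mono2) auto
        moreover have "(\<Sum>w\<in>Sv. lam w * d) = \<Lambda> * d" unfolding \<Lambda>_def by (simp add: sum_distrib_right)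
        moreover have "- d \<le> F xbar - F x" using xF d1 by linarith
        ultimately have lo: "- ((1 + \<Lambda>) * d) \<le> e v * lam v" using esum by (simp add: algebra_simps)
        have lv: "0 < lam v" using lam v by blast
        have "- ((1 + \<Lambda>) * d) / lam v \<le> e v" using pos_divide_le_eq[OF lv] lo by blast
        moreover have "(1 + \<Lambda>) * d / lam v \<le> K * d"
        proof -
          have "1 / lam v \<le> Q" unfolding Q_def using Sv(1) v lam
            by (intro member_le_sum) auto
          then have "(1 + \<Lambda>) * d * (1 / lam v) \<le> (1 + \<Lambda>) * d * Q"
            using La0 d0 by (intro mult_left_mono) auto
          also have "\<dots> \<le> K * d" unfolding K_def using d0 by (simp add: algebra_simps)
          finally show ?thesis by simp
        qed
        ultimately show ?thesis by (smt (verit) minus_divide_left)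
      qed
      define b' where "b' t = max (g t x) (bbar t - K * d)" for t
      have b'c: "continuous_on T b'" unfolding b'_def
        by (intro continuous_on_max gc continuous_on_diff bbar_cont continuous_on_const)
      have sd': "supdist T b' bbar \<le> K * d"
      proof (rule supdist_le)
        show "0 \<le> K * d" using K1 d0 by simp
        fix t assume t: "t \<in> T"
        have "g t x - bbar t \<le> d" using xg sb[OF t] t by fastforce
        then show "\<bar>b' t - bbar t\<bar> \<le> K * d" unfolding b'_def using dK d0 K1 by (auto simp: max_def)
      qed
      have sd0: "0 \<le> supdist T b' bbar" by (rule supdist_nonneg[OF T(1) b'c bbar_cont])
      have b'v: "b' (tv v) = g (tv v) x" if "v \<in> Sv" for v
        using el[OF that] tv(2)[OF that] unfolding b'_def e_def by simp
      have xo: "x \<in> optset T f g (cbar, b')"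
      proof -
        have xf: "\<forall>t\<in>T. g t x \<le> b' t" unfolding b'_def by simp
        have "F x \<le> F y" if y: "\<forall>t\<in>T. g t y \<le> b' t" for y
        proof -
          have "(\<Sum>v\<in>Sv. lam v * g (tv v) y) \<le> (\<Sum>v\<in>Sv. lam v * g (tv v) x)"
          proof (rule sum_mono)
            fix v assume v: "v \<in> Sv"
            show "lam v * g (tv v) y \<le> lam v * g (tv v) x"
              using y tv(1)[OF v] b'v[OF v] lam v by (intro mult_left_mono) auto
          qed
          then show ?thesis using Frep[of x] Frep[of y] by simp
        qed
        then show ?thesis using xf by (auto simp: optset_def feas_def F_def)
      qed
      have "Kd": "K * d < \<epsilon>" using pe0 K1 unfolding d_def by (simp add: pos_less_divide_eq mult.commute)
      have "b' \<in> Cset" using b'c by (simp add: Cset_def)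
      then have "\<tau> * infdist x (optset T f g (cbar, bbar)) \<le> (supdist T b' bbar) powr q"
        using H sd' Kd xo dx by fastforce
      also have "\<dots> \<le> (K * d) powr q" using sd' sd0 q by (intro powr_mono2) auto
      also have "\<dots> = K powr q * d powr q" by (rule powr_mult)
      finally have "\<tau>' * infdist x (optset T f g (cbar, bbar)) \<le> d powr q"
        unfolding \<tau>'_def using Kp by (simp add: divide_le_eq mult.commute mult.left_commute)
      then show "\<tau>' * infdist x (levelset T f g cbar ?p0) \<le> (ldist T p ?p0) powr q"
        using L0 d_def by simp
    qed
    then show ?thesis unfolding st_iii_def q_calm_def using tau' del eps' by blast
  qed
  show ?thesis using iii_iv iv_iii iv_i i_ii lin by blast
qed

end
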